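(* Let $\Gamma$ be an edge-regular graph that has a regular clique, and suppose that $\Gamma$ is not strongly regular. Then $\Gamma$ has a regular clique of order at least $4$.
   Context: A graph is edge-regular if it is non-empty, $k$-regular for some $k$, and every two adjacent vertices have exactly $\lambda$ common neighbours for some constant $\lambda$. It is strongly regular if moreover every two distinct non-adjacent vertices have exactly $\mu$ common neighbours for some constant $\mu$. A clique $\mathcal C$ is regular if every vertex not in $\mathcal C$ is adjacent to the same number $e>0$ of vertices of $\mathcal C$. *)

theory Defs
  imports Main
begin

definition simple_graph :: "'a set \<Rightarrow> ('a \<Rightarrow> 'a \<Rightarrow> bool) \<Rightarrow> bool" where
  "simple_graph V E \<longleftrightarrow> finite V \<and> (\<forall>x y. E x y \<longrightarrow> x \<in> V \<and> y \<in> V)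
     \<and> (\<forall>x y. E x y \<longrightarrow> E y x) \<and> (\<forall>x. \<not> E x x)"

definition nbrs :: "'a set \<Rightarrow> ('a \<Rightarrow> 'a \<Rightarrow> bool) \<Rightarrow> 'a \<Rightarrow> 'a set" where
  "nbrs V E x = {y \<in> V. E x y}"

text \<open>Non-empty = has at least one edge.\<close>
definition edge_regular :: "'a set \<Rightarrow> ('a \<Rightarrow> 'a \<Rightarrow> bool) \<Rightarrow> bool" where
  "edge_regular V E \<longleftrightarrow> simple_graph V E \<and> (\<exists>x y. E x y)
     \<and> (\<exists>k. \<forall>x\<in>V. card (nbrs V E x) = k)
     \<and> (\<exists>lam. \<forall>x y. E x y \<longrightarrow> card (nbrs V E x \<inter> nbrs V E y) = lam)"

definition strongly_regular :: "'a set \<Rightarrow> ('a \<Rightarrow> 'a \<Rightarrow> bool) \<Rightarrow> bool" where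
  "strongly_regular V E \<longleftrightarrow> edge_regular V E
     \<and> (\<exists>mu. \<forall>x\<in>V. \<forall>y\<in>V. x \<noteq> y \<and> \<not> E x y \<longrightarrow> card (nbrs V E x \<inter> nbrs V E y) = mu)"

definition is_clique :: "'a set \<Rightarrow> ('a \<Rightarrow> 'a \<Rightarrow> bool) \<Rightarrow> 'a set \<Rightarrow> bool" where
  "is_clique V E C \<longleftrightarrow> C \<subseteq> V \<and> (\<forall>x\<in>C. \<forall>y\<in>C. x \<noteq> y \<longrightarrow> E x y)"

definition regular_clique :: "'a set \<Rightarrow> ('a \<Rightarrow> 'a \<Rightarrow> bool) \<Rightarrow> 'a set \<Rightarrow> bool" where
  "regular_clique V E C \<longleftrightarrow> is_clique V E C
     \<and> (\<exists>e::nat. e > 0 \<and> (\<forall>v\<in>V - C. card {w \<in> C. E v w} = e))"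

end

theory Submission
  imports Defs
begin

lemma sg_basic:
  assumes "simple_graph V E"
  shows "finite V" "\<And>x y. E x y \<Longrightarrow> x \<in> V" "\<And>x y. E x y \<Longrightarrow> y \<in> V"
    "\<And>x y. E x y \<Longrightarrow> E y x" "\<And>x. \<not> E x x"
    "\<And>x. finite (nbrs V E x)" "\<And>x. nbrs V E x \<subseteq> V" "\<And>x. x \<notin> nbrs V E x"
    "\<And>x y. y \<in> nbrs V E x \<longleftrightarrow> E x y"
  using assms unfolding simple_graph_def nbrs_def
  by (auto intro: finite_subset)

lemma complete_srg:
  assumes sg: "simple_graph V E" and ed: "E x0 y0"
    and deg: "\<forall>x\<in>V. card (nbrs V E x) = k"
    and lam: "\<forall>x y. E x y \<longrightarrow> card (nbrs V E x \<inter> nbrs V E y) = l"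
    and comp: "\<forall>x\<in>V. \<forall>y\<in>V. x \<noteq> y \<longrightarrow> E x y"
  shows "strongly_regular V E"
  unfolding strongly_regular_def edge_regular_def using assms by blast

lemma multipartite_srg:
  assumes sg: "simple_graph V E" and ed: "E x0 y0"
    and deg: "\<forall>x\<in>V. card (nbrs V E x) = k"
    and lam: "\<forall>x y. E x y \<longrightarrow> card (nbrs V E x \<inter> nbrs V E y) = l"
    and eq: "l + card V = 2 * k"
  shows "strongly_regular V E"
proof -
  note b = sg_basic[OF sg]
  have sub: "nbrs V E x \<subseteq> nbrs V E y"
    if xy: "x \<in> V" "y \<in> V" "x \<noteq> y" "\<not> E x y" for x y
  proof
    fix z assume zx: "z \<in> nbrs V E x"
    hence Exz: "E x z" and zV: "z \<in> V" using b by auto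
    define W where "W = V - nbrs V E x - {x}"
    have fW: "finite W" using b W_def by auto
    have cW: "card W = card V - k - 1"
    proof -
      have "card (V - nbrs V E x) = card V - k"
        using b xy deg by (simp add: card_Diff_subset)
      moreover have "x \<in> V - nbrs V E x" using b xy by auto
      ultimately show ?thesis unfolding W_def using b by (simp add: card_Diff_singleton)
    qed
    have cov: "nbrs V E z \<subseteq> (nbrs V E z \<inter> nbrs V E x) \<union> {x} \<union> (nbrs V E z \<inter> W)"
      using b W_def by auto
    have "card (nbrs V E z) \<le> card ((nbrs V E z \<inter> nbrs V E x) \<union> {x} \<union> (nbrs V E z \<inter> W))"
      using cov b fW by (intro card_mono) auto
    also have "\<dots> \<le> card (nbrs V E z \<inter> nbrs V E x) + card {x} + card (nbrs V E z \<inter> W)"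
      by (meson card_Un_le le_trans add_le_mono order_refl)
    finally have i1: "k \<le> l + 1 + card (nbrs V E z \<inter> W)"
      using deg zV lam b(4)[OF Exz] by simp
    have "card (nbrs V E x) \<le> card V" using b by (simp add: card_mono)
    hence kV: "k + 1 \<le> card V"
    proof -
      have "insert x (nbrs V E x) \<subseteq> V" using b xy by auto
      hence "card (insert x (nbrs V E x)) \<le> card V" by (rule card_mono[OF b(1)])
      moreover have "card (insert x (nbrs V E x)) = k + 1" using b deg xy by simp
      ultimately show ?thesis by simp
    qed
    have "card W \<le> card (nbrs V E z \<inter> W)" using i1 cW eq kV by linarith
    hence "nbrs V E z \<inter> W = W" using fW by (meson card_seteq inf_le2)
    moreover have "y \<in> W" using xy b W_def by auto
    ultimately have "E z y" using b by auto
    thus "z \<in> nbrs V E y" using b by auto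
  qed
  show ?thesis
    unfolding strongly_regular_def edge_regular_def
  proof (intro conjI exI)
    show "simple_graph V E" "E x0 y0" by fact+
    show "\<forall>x\<in>V. card (nbrs V E x) = k" by fact
    show "\<forall>x y. E x y \<longrightarrow> card (nbrs V E x \<inter> nbrs V E y) = l" by fact
    show "\<forall>x\<in>V. \<forall>y\<in>V. x \<noteq> y \<and> \<not> E x y \<longrightarrow> card (nbrs V E x \<inter> nbrs V E y) = k"
    proof (intro ballI impI)
      fix x y assume "x \<in> V" "y \<in> V" "x \<noteq> y \<and> \<not> E x y"
      hence "nbrs V E x = nbrs V E y" using sub[of x y] sub[of y x] b by blast
      thus "card (nbrs V E x \<inter> nbrs V E y) = k" using deg \<open>x \<in> V\<close> by (metis Int_absorb)
    qed
  qed
qed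

lemma unique_common:
  assumes sg: "simple_graph V E"
    and lam: "\<forall>x y. E x y \<longrightarrow> card (nbrs V E x \<inter> nbrs V E y) = 1"
    and "E p q" "E p r" "E q r" and w: "E p w" "E q w"
  shows "w = r"
proof -
  note b = sg_basic[OF sg]
  have "card (nbrs V E p \<inter> nbrs V E q) = 1" using lam assms by blast
  then obtain t where t: "nbrs V E p \<inter> nbrs V E q = {t}" by (meson card_1_singletonE)
  have "r \<in> nbrs V E p \<inter> nbrs V E q" "w \<in> nbrs V E p \<inter> nbrs V E q"
    using b assms by auto
  thus ?thesis using t by auto
qed

lemma line_lemma:
  assumes sg: "simple_graph V E"
    and deg: "\<forall>x\<in>V. card (nbrs V E x) = k"
    and lam: "\<forall>x y. E x y \<longrightarrow> card (nbrs V E x \<inter> nbrs V E y) = 1"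
    and eq: "card V + 3 = 3 * k"
    and pq: "E p q" and pr: "E p r" and qr: "E q r"
    and u: "u \<in> V" "u \<noteq> p" "u \<noteq> q" "u \<noteq> r"
  shows "E u p \<or> E u q \<or> E u r"
proof (rule ccontr)
  assume nu: "\<not> (E u p \<or> E u q \<or> E u r)"
  note b = sg_basic[OF sg]
  have d: "p \<noteq> q" "p \<noteq> r" "q \<noteq> r" using b pq pr qr by metis+
  have V: "p \<in> V" "q \<in> V" "r \<in> V" using b pq pr qr by auto
  define Xp where "Xp = nbrs V E p - {q, r}"
  define Xq where "Xq = nbrs V E q - {p, r}"
  define Xr where "Xr = nbrs V E r - {p, q}"
  have cXp: "card Xp = k - 2" unfolding Xp_def using deg V b pq pr d
    by (subst card_Diff_subset) auto
  have cXq: "card Xq = k - 2" unfolding Xq_def using deg V b pq qr d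
    by (subst card_Diff_subset) (auto intro: b(4))
  have cXr: "card Xr = k - 2" unfolding Xr_def using deg V b pr qr d
    by (subst card_Diff_subset) (auto intro: b(4))
  have f: "finite Xp" "finite Xq" "finite Xr" using b Xp_def Xq_def Xr_def by auto
  have dpq: "Xp \<inter> Xq = {}"
    using unique_common[OF sg lam pq pr qr] b unfolding Xp_def Xq_def by auto
  have dpr: "Xp \<inter> Xr = {}"
    using unique_common[OF sg lam pr pq b(4)[OF qr]] b unfolding Xp_def Xr_def by auto
  have dqr: "Xq \<inter> Xr = {}"
    using unique_common[OF sg lam qr b(4)[OF pq] b(4)[OF pr]] b unfolding Xq_def Xr_def by auto
  have cU: "card (Xp \<union> Xq \<union> Xr) = 3 * (k - 2)"
    using f dpq dpr dqr cXp cXq cXr by (simp add: card_Un_disjoint Int_Un_distrib2)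
  have sub: "Xp \<union> Xq \<union> Xr \<subseteq> V - {p, q, r} - {u}"
    using b nu unfolding Xp_def Xq_def Xr_def by auto
  have s4: "{p, q, r, u} \<subseteq> V" using V u by auto
  have c4: "card {p, q, r, u} = 4" using d u by simp
  have "card {p, q, r, u} \<le> card V" using s4 b(1) by (simp add: card_mono)
  hence V4: "card V \<ge> 4" using c4 by simp
  have "card (V - {p, q, r} - {u}) = card V - 4"
  proof -
    have "V - {p, q, r} - {u} = V - {p, q, r, u}" by auto
    thus ?thesis using card_Diff_subset[OF finite_subset[OF s4 b(1)] s4] c4 by simp
  qed
  moreover have "card (Xp \<union> Xq \<union> Xr) \<le> card (V - {p, q, r} - {u})"
    using sub b by (intro card_mono) auto
  moreover have "k \<ge> 2"
  proof -
    have "{q, r} \<subseteq> nbrs V E p" using b pq pr by auto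
    hence "card {q, r} \<le> card (nbrs V E p)" using b by (intro card_mono) auto
    thus ?thesis using d deg V by simp
  qed
  ultimately show False using cU eq V4 by linarith
qed

lemma gq_srg:
  assumes sg: "simple_graph V E" and ed: "E x0 y0"
    and deg: "\<forall>x\<in>V. card (nbrs V E x) = k"
    and lam: "\<forall>x y. E x y \<longrightarrow> card (nbrs V E x \<inter> nbrs V E y) = 1"
    and eq: "card V + 3 = 3 * k"
  shows "strongly_regular V E"
proof -
  note b = sg_basic[OF sg]
  have main: "card (nbrs V E x \<inter> nbrs V E y) = k div 2"
    if xy: "x \<in> V" "y \<in> V" "x \<noteq> y" "\<not> E x y" for x y
  proof -
    define N where "N = nbrs V E x"
    define f where "f z = (THE w. w \<in> N \<inter> nbrs V E z)" for z
    have fp: "f z \<in> N \<inter> nbrs V E z \<and> (\<forall>w \<in> N \<inter> nbrs V E z. w = f z)" if "z \<in> N" for z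
    proof -
      have "E x z" using that b N_def by auto
      hence "card (N \<inter> nbrs V E z) = 1" using lam N_def by blast
      then obtain t where t: "N \<inter> nbrs V E z = {t}" by (meson card_1_singletonE)
      have "f z = t" unfolding f_def t by simp
      thus ?thesis using t by auto
    qed
    have fE: "E x (f z)" "E z (f z)" "f z \<noteq> z" if "z \<in> N" for z
      using fp[OF that] b N_def by auto
    have ff: "f (f z) = z" if "z \<in> N" for z
    proof -
      have "f z \<in> N" using fp[OF that] by auto
      moreover have "z \<in> N \<inter> nbrs V E (f z)" using that fE[OF that] b by auto
      ultimately have "z = f (f z)" using fp[of "f z"] by blast
      thus ?thesis by simp
    qed
    have key: "E y z \<longleftrightarrow> \<not> E y (f z)" if z: "z \<in> N" for z
    proof -
      have Exz: "E x z" using z b N_def by auto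
      have "y \<noteq> z" "y \<noteq> f z" using xy fE[OF z] Exz by auto
      hence "E y x \<or> E y z \<or> E y (f z)"
        using line_lemma[OF sg deg lam eq Exz fE(1)[OF z] fE(2)[OF z] xy(2)] xy by auto
      moreover have "\<not> E y x" using xy b by auto
      moreover have "\<not> (E y z \<and> E y (f z))"
      proof
        assume h: "E y z \<and> E y (f z)"
        have "y = x" using unique_common[OF sg lam fE(2)[OF z] b(4)[OF Exz] b(4)[OF fE(1)[OF z]]
            b(4)[of y z] b(4)[of y "f z"]] h by blast
        thus False using xy by simp
      qed
      ultimately show ?thesis by blast
    qed
    define A where "A = N \<inter> nbrs V E y"
    define B where "B = N - nbrs V E y"
    have fin: "finite A" "finite B" using b A_def B_def N_def by auto
    have inj: "inj_on f N"
    proof (rule inj_onI)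
      fix u w assume "u \<in> N" "w \<in> N" "f u = f w"
      thus "u = w" using ff by metis
    qed
    have fA: "f ` A \<subseteq> B"
    proof
      fix w assume "w \<in> f ` A"
      then obtain z where z: "z \<in> A" "w = f z" by auto
      hence zN: "z \<in> N" "E y z" using A_def b(9) by auto
      hence "\<not> E y (f z)" using key by blast
      hence "f z \<notin> nbrs V E y" using b(9) by blast
      thus "w \<in> B" using fp[OF zN(1)] z B_def by blast
    qed
    have fB: "f ` B \<subseteq> A"
    proof
      fix w assume "w \<in> f ` B"
      then obtain z where z: "z \<in> B" "w = f z" by auto
      hence zN: "z \<in> N" "\<not> E y z" using B_def b(9) by auto
      hence "E y (f z)" using key by blast
      hence "f z \<in> nbrs V E y" using b(9) by blast
      thus "w \<in> A" using fp[OF zN(1)] z A_def by blast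
    qed
    have "card A \<le> card B"
      using card_inj_on_le[OF inj_on_subset[OF inj] fA fin(2)] A_def by auto
    moreover have "card B \<le> card A"
      using card_inj_on_le[OF inj_on_subset[OF inj] fB fin(1)] B_def by auto
    moreover have "card A + card B = k"
    proof -
      have "A \<union> B = N" "A \<inter> B = {}" using A_def B_def by auto
      hence "card A + card B = card N" using fin card_Un_disjoint by metis
      thus ?thesis using deg xy N_def by simp
    qed
    ultimately show ?thesis unfolding A_def N_def by linarith
  qed
  show ?thesis
    unfolding strongly_regular_def edge_regular_def
  proof (intro conjI exI)
    show "simple_graph V E" "E x0 y0" by fact+
    show "\<forall>x\<in>V. card (nbrs V E x) = k" by fact
    show "\<forall>x y. E x y \<longrightarrow> card (nbrs V E x \<inter> nbrs V E y) = 1" by fact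
    show "\<forall>x\<in>V. \<forall>y\<in>V. x \<noteq> y \<and> \<not> E x y \<longrightarrow> card (nbrs V E x \<inter> nbrs V E y) = k div 2"
      using main by blast
  qed
qed

lemma card2_obt:
  assumes "card C = 2"
  obtains a b where "C = {a, b}" "a \<noteq> b"
proof -
  have "card C = Suc (Suc 0)" using assms by simp
  then show ?thesis using that by (auto simp: card_Suc_eq)
qed

lemma card3_obt:
  assumes "card C = 3"
  obtains a b c where "C = {a, b, c}" "a \<noteq> b" "a \<noteq> c" "b \<noteq> c"
proof -
  have "card C = Suc (Suc (Suc 0))" using assms by simp
  then show ?thesis using that by (auto simp: card_Suc_eq)
qed

lemma filt_insert: "{w \<in> insert x A. P w} = (if P x then insert x {w\<in>A. P w} else {w\<in>A. P w})"
  by auto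

lemma card3_count:
  assumes "a \<noteq> b" "a \<noteq> c" "b \<noteq> c"
  shows "card {w \<in> {a, b, c}. P w} =
    (if P a then 1 else 0) + (if P b then 1 else 0) + (if P c then (1::nat) else 0)"
  using assms by (simp only: filt_insert) (simp add: card_insert_if)

lemma card2_count:
  assumes "a \<noteq> b"
  shows "card {w \<in> {a, b}. P w} = (if P a then 1 else 0) + (if P b then (1::nat) else 0)"
  using assms by (simp only: filt_insert) (simp add: card_insert_if)

lemma ex2_1:
  assumes d: "a \<noteq> b" and h: "card {w \<in> {a, b}. P w} = 1"
  shows "(P a \<and> \<not> P b) \<or> (\<not> P a \<and> P b)"
proof -
  have "(if P a then 1 else 0) + (if P b then 1 else 0) = (1::nat)"
    using h card2_count[OF d, of P] by argo
  thus ?thesis by (cases "P a"; cases "P b") simp_all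
qed

lemma ex3_1:
  assumes d: "a \<noteq> b" "a \<noteq> c" "b \<noteq> c" and h: "card {w \<in> {a, b, c}. P w} = 1"
  shows "(P a \<and> \<not> P b \<and> \<not> P c) \<or> (\<not> P a \<and> P b \<and> \<not> P c)
      \<or> (\<not> P a \<and> \<not> P b \<and> P c)"
proof -
  have "(if P a then 1 else 0) + (if P b then 1 else 0) + (if P c then 1 else 0) = (1::nat)"
    using h card3_count[OF d, of P] by argo
  thus ?thesis by (cases "P a"; cases "P b"; cases "P c") simp_all
qed

lemma ex3_2:
  assumes d: "a \<noteq> b" "a \<noteq> c" "b \<noteq> c" and h: "card {w \<in> {a, b, c}. P w} = 2"
  shows "(\<not> P a \<and> P b \<and> P c) \<or> (P a \<and> \<not> P b \<and> P c)
      \<or> (P a \<and> P b \<and> \<not> P c)"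
proof -
  have "(if P a then 1 else 0) + (if P b then 1 else 0) + (if P c then 1 else 0) = (2::nat)"
    using h card3_count[OF d, of P] by argo
  thus ?thesis by (cases "P a"; cases "P b"; cases "P c") simp_all
qed

lemma universal_srg:
  assumes sg: "simple_graph V E" and ed: "E x0 y0"
    and deg: "\<forall>x\<in>V. card (nbrs V E x) = k"
    and lam: "\<forall>x y. E x y \<longrightarrow> card (nbrs V E x \<inter> nbrs V E y) = l"
    and a: "a \<in> V" "\<forall>y\<in>V. y \<noteq> a \<longrightarrow> E a y"
  shows "strongly_regular V E"
proof -
  note g = sg_basic[OF sg]
  have symE: "\<And>x y. E x y \<longleftrightarrow> E y x" using g(4) by blast
  note gs = g(1,2,3,5,6,7,8,9) symE
  have "nbrs V E a = V - {a}" using a gs by auto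
  moreover have "card (nbrs V E a) = k" using deg a by blast
  moreover have "card (V - {a}) = card V - 1" using a g(1) by simp
  ultimately have kV: "k = card V - 1" by simp
  have "\<forall>x\<in>V. \<forall>y\<in>V. x \<noteq> y \<longrightarrow> E x y"
  proof (intro ballI impI)
    fix x y assume xy: "x \<in> V" "y \<in> V" "x \<noteq> y"
    have sub: "nbrs V E x \<subseteq> V - {x}" using gs by auto
    have "card (nbrs V E x) = card (V - {x})" using deg xy kV gs by simp
    hence "nbrs V E x = V - {x}" using card_seteq[OF finite_Diff[OF g(1)] sub] by simp
    hence "y \<in> nbrs V E x" using xy by blast
    thus "E x y" using g(9) by blast
  qed
  thus ?thesis using complete_srg[OF sg ed deg lam] by blast
qed

lemma clique2_e1:
  assumes sg: "simple_graph V E" and ed: "E x0 y0"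
    and deg: "\<forall>x\<in>V. card (nbrs V E x) = k"
    and lam: "\<forall>x y. E x y \<longrightarrow> card (nbrs V E x \<inter> nbrs V E y) = l"
    and ab: "E a b"
    and cnt: "\<forall>v\<in>V - {a, b}. card {w \<in> {a, b}. E v w} = 1"
  shows "strongly_regular V E"
proof -
  note g = sg_basic[OF sg]
  have symE: "\<And>x y. E x y \<longleftrightarrow> E y x" using g(4) by blast
  note gs = g(1,2,3,5,6,7,8,9) symE
  have mN: "\<And>x v. v \<in> nbrs V E x \<longleftrightarrow> v \<in> V \<and> E v x" unfolding nbrs_def using g(2) g(4) by blast
  have irr: "\<And>v. \<not> E v v" using g(5) by blast
  have d: "a \<noteq> b" using ab g(5) by blast
  have V: "a \<in> V" "b \<in> V" using ab gs by auto
  have sy: "E b a" using ab g(4) by blast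
  have ex: "(E v a \<and> \<not> E v b) \<or> (\<not> E v a \<and> E v b)" if "v \<in> V - {a, b}" for v
    using cnt that ex2_1[OF d, of "E v"] by blast
  have ex': "\<And>v. v \<in> V \<Longrightarrow> v \<noteq> a \<Longrightarrow> v \<noteq> b \<Longrightarrow> (E v a \<and> \<not> E v b) \<or> (\<not> E v a \<and> E v b)"
    using ex by blast
  have "nbrs V E a \<inter> nbrs V E b = {}"
  proof (rule ccontr)
    assume "nbrs V E a \<inter> nbrs V E b \<noteq> {}"
    then obtain w where w: "E a w" "E b w" "w \<in> V" using gs by auto
    have "w \<noteq> a" "w \<noteq> b" using w g(5) by blast+
    thus False using ex[of w] w symE by auto
  qed
  hence l0: "l = 0" using lam ab by force
  define Xa where "Xa = nbrs V E a - {b}"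
  define Xb where "Xb = nbrs V E b - {a}"
  have cXa: "card Xa = k - 1" unfolding Xa_def using deg V gs ab by simp
  have cXb: "card Xb = k - 1" unfolding Xb_def using deg V gs ab by (simp add: symE)
  have "b \<in> nbrs V E a" using ab g(9) by blast
  hence "card (nbrs V E a) > 0" using g(6)[of a] card_gt_0_iff by blast
  hence k1: "k \<ge> 1" using deg V by simp
  have U: "V - {a, b} = Xa \<union> Xb"
    by (simp add: set_eq_iff mN Xa_def Xb_def) (use ex' d irr V sy in blast)
  have dj: "Xa \<inter> Xb = {}"
    by (simp add: set_eq_iff mN Xa_def Xb_def) (use ex' d irr V sy in blast)
  have f: "finite Xa" "finite Xb" unfolding Xa_def Xb_def using gs by auto
  have "card (V - {a, b}) = 2 * (k - 1)" using U dj f cXa cXb by (simp add: card_Un_disjoint)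
  moreover have "card (V - {a, b}) = card V - 2" using V d gs by (simp add: card_Diff_subset)
  moreover have "card V \<ge> 2"
  proof -
    have "card {a, b} \<le> card V" using V g(1) by (simp add: card_mono)
    thus ?thesis using d by simp
  qed
  ultimately have "l + card V = 2 * k" using l0 k1 by linarith
  thus ?thesis using multipartite_srg[OF sg ed deg lam] by blast
qed

lemma clique3_e1:
  assumes sg: "simple_graph V E" and ed: "E x0 y0"
    and deg: "\<forall>x\<in>V. card (nbrs V E x) = k"
    and lam: "\<forall>x y. E x y \<longrightarrow> card (nbrs V E x \<inter> nbrs V E y) = l"
    and ab: "E a b" and ac: "E a c" and bc: "E b c"
    and cnt: "\<forall>v\<in>V - {a, b, c}. card {w \<in> {a, b, c}. E v w} = 1"
  shows "strongly_regular V E"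
proof -
  note g = sg_basic[OF sg]
  have symE: "\<And>x y. E x y \<longleftrightarrow> E y x" using g(4) by blast
  note gs = g(1,2,3,5,6,7,8,9) symE
  have mN: "\<And>x v. v \<in> nbrs V E x \<longleftrightarrow> v \<in> V \<and> E v x" unfolding nbrs_def using g(2) g(4) by blast
  have irr: "\<And>v. \<not> E v v" using g(5) by blast
  have d: "a \<noteq> b" "a \<noteq> c" "b \<noteq> c" using ab ac bc g(5) by blast+
  have V: "a \<in> V" "b \<in> V" "c \<in> V" using ab bc gs by auto
  have sy: "E b a" "E c a" "E c b" "E a b" "E a c" "E b c" using ab ac bc g(4) by blast+
  have ex: "(E v a \<and> \<not> E v b \<and> \<not> E v c) \<or> (\<not> E v a \<and> E v b \<and> \<not> E v c)
      \<or> (\<not> E v a \<and> \<not> E v b \<and> E v c)" if "v \<in> V - {a, b, c}" for v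
    using cnt that ex3_1[OF d, of "E v"] ex3_2[OF d, of "E v"] by auto
  have ex': "\<And>v. v \<in> V \<Longrightarrow> v \<noteq> a \<Longrightarrow> v \<noteq> b \<Longrightarrow> v \<noteq> c \<Longrightarrow> (E v a \<and> \<not> E v b \<and> \<not> E v c) \<or> (\<not> E v a \<and> E v b \<and> \<not> E v c)
      \<or> (\<not> E v a \<and> \<not> E v b \<and> E v c)"
    using ex by blast
  have "nbrs V E a \<inter> nbrs V E b = {c}"
  proof
    show "{c} \<subseteq> nbrs V E a \<inter> nbrs V E b" using ac bc gs by auto
    show "nbrs V E a \<inter> nbrs V E b \<subseteq> {c}"
    proof
      fix w assume "w \<in> nbrs V E a \<inter> nbrs V E b"
      hence w: "E a w" "E b w" "w \<in> V" using gs by auto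
      have "w \<noteq> a" "w \<noteq> b" using w g(5) by blast+
      thus "w \<in> {c}" using ex[of w] w symE by auto
    qed
  qed
  hence l1: "l = 1" using lam ab by force
  define Xa where "Xa = nbrs V E a - {b, c}"
  define Xb where "Xb = nbrs V E b - {a, c}"
  define Xc where "Xc = nbrs V E c - {a, b}"
  have cXa: "card Xa = k - 2" unfolding Xa_def using deg V gs ab ac d
    by (subst card_Diff_subset) auto
  have cXb: "card Xb = k - 2" unfolding Xb_def using deg V gs ab bc d
    by (subst card_Diff_subset) (auto intro: g(4))
  have cXc: "card Xc = k - 2" unfolding Xc_def using deg V gs ac bc d
    by (subst card_Diff_subset) (auto intro: g(4))
  have k2: "k \<ge> 2"
  proof -
    have "{b, c} \<subseteq> nbrs V E a" using gs ab ac by auto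
    hence "card {b, c} \<le> card (nbrs V E a)" using gs by (intro card_mono) auto
    thus ?thesis using d deg V by simp
  qed
  have U: "V - {a, b, c} = Xa \<union> Xb \<union> Xc"
    by (simp add: set_eq_iff mN Xa_def Xb_def Xc_def) (use ex' d irr V sy in blast)
  have dj1: "Xa \<inter> Xb = {}"
    by (simp add: set_eq_iff mN Xa_def Xb_def Xc_def) (use ex' d irr V sy in blast)
  have dj2: "Xa \<inter> Xc = {}"
    by (simp add: set_eq_iff mN Xa_def Xb_def Xc_def) (use ex' d irr V sy in blast)
  have dj3: "Xb \<inter> Xc = {}"
    by (simp add: set_eq_iff mN Xa_def Xb_def Xc_def) (use ex' d irr V sy in blast)
  note dj = dj1 dj2 dj3
  have f: "finite Xa" "finite Xb" "finite Xc" unfolding Xa_def Xb_def Xc_def using gs by auto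
  have "card (V - {a, b, c}) = 3 * (k - 2)" using U dj f cXa cXb cXc
    by (simp add: card_Un_disjoint Int_Un_distrib2)
  moreover have "card (V - {a, b, c}) = card V - 3" using V d gs by (simp add: card_Diff_subset)
  moreover have "card V \<ge> 3"
  proof -
    have "card {a, b, c} \<le> card V" using V g(1) by (simp add: card_mono)
    thus ?thesis using d by simp
  qed
  ultimately have "card V + 3 = 3 * k" using k2 by linarith
  moreover have "\<forall>x y. E x y \<longrightarrow> card (nbrs V E x \<inter> nbrs V E y) = 1" using lam l1 by simp
  ultimately show ?thesis using gq_srg[OF sg ed deg] by blast
qed

lemma clique3_e2:
  assumes sg: "simple_graph V E" and ed: "E x0 y0"
    and deg: "\<forall>x\<in>V. card (nbrs V E x) = k"
    and lam: "\<forall>x y. E x y \<longrightarrow> card (nbrs V E x \<inter> nbrs V E y) = l"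
    and ab: "E a b" and ac: "E a c" and bc: "E b c"
    and cnt: "\<forall>v\<in>V - {a, b, c}. card {w \<in> {a, b, c}. E v w} = 2"
  shows "strongly_regular V E"
proof -
  note g = sg_basic[OF sg]
  have symE: "\<And>x y. E x y \<longleftrightarrow> E y x" using g(4) by blast
  note gs = g(1,2,3,5,6,7,8,9) symE
  have mN: "\<And>x v. v \<in> nbrs V E x \<longleftrightarrow> v \<in> V \<and> E v x" unfolding nbrs_def using g(2) g(4) by blast
  have irr: "\<And>v. \<not> E v v" using g(5) by blast
  have d: "a \<noteq> b" "a \<noteq> c" "b \<noteq> c" using ab ac bc g(5) by blast+
  have V: "a \<in> V" "b \<in> V" "c \<in> V" using ab bc gs by auto
  have sy: "E b a" "E c a" "E c b" "E a b" "E a c" "E b c" using ab ac bc g(4) by blast+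
  have ex: "(\<not> E v a \<and> E v b \<and> E v c) \<or> (E v a \<and> \<not> E v b \<and> E v c)
      \<or> (E v a \<and> E v b \<and> \<not> E v c)" if "v \<in> V - {a, b, c}" for v
    using cnt that ex3_1[OF d, of "E v"] ex3_2[OF d, of "E v"] by auto
  have ex': "\<And>v. v \<in> V \<Longrightarrow> v \<noteq> a \<Longrightarrow> v \<noteq> b \<Longrightarrow> v \<noteq> c \<Longrightarrow> (\<not> E v a \<and> E v b \<and> E v c) \<or> (E v a \<and> \<not> E v b \<and> E v c)
      \<or> (E v a \<and> E v b \<and> \<not> E v c)"
    using ex by blast
  define W where "W = V - {a, b, c}"
  define Xa where "Xa = nbrs V E a - {b, c}"
  define Xb where "Xb = nbrs V E b - {a, c}"
  define Xc where "Xc = nbrs V E c - {a, b}"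
  have cXa: "card Xa = k - 2" unfolding Xa_def using deg V gs ab ac d
    by (subst card_Diff_subset) auto
  have cXb: "card Xb = k - 2" unfolding Xb_def using deg V gs ab bc d
    by (subst card_Diff_subset) (auto intro: g(4))
  have cXc: "card Xc = k - 2" unfolding Xc_def using deg V gs ac bc d
    by (subst card_Diff_subset) (auto intro: g(4))
  have k2: "k \<ge> 2"
  proof -
    have "{b, c} \<subseteq> nbrs V E a" using gs ab ac by auto
    hence "card {b, c} \<le> card (nbrs V E a)" using gs by (intro card_mono) auto
    thus ?thesis using d deg V by simp
  qed
  have fW: "finite W" using W_def gs by auto
  have sXb: "Xb \<subseteq> W" and sXc: "Xc \<subseteq> W" unfolding W_def Xb_def Xc_def using gs d by auto
  have cW: "card W = card V - 3" unfolding W_def using V d gs by (simp add: card_Diff_subset)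
  have V3: "card V \<ge> 3"
  proof -
    have "card {a, b, c} \<le> card V" using V g(1) by (simp add: card_mono)
    thus ?thesis using d by simp
  qed
  have cWc: "card (W - Xc) = card W - (k - 2)"
    using card_Diff_subset[OF finite_subset[OF sXc fW] sXc] cXc by simp
  have cWb: "card (W - Xb) = card W - (k - 2)"
    using card_Diff_subset[OF finite_subset[OF sXb fW] sXb] cXb by simp
  have jm: "k - 2 \<le> card W" using sXc fW cXc by (metis card_mono)
  have "nbrs V E a \<inter> nbrs V E b = insert c (W - Xc)"
    using ac bc by (simp add: set_eq_iff mN Xa_def Xb_def Xc_def W_def) (use ex' d irr V sy in blast)
  hence "l = card (insert c (W - Xc))" using lam ab by force
  hence ll: "l = 1 + (card W - (k - 2))" using cWc fW W_def by simp
  have "Xa = (W - Xc) \<union> (W - Xb)" by (simp add: set_eq_iff mN Xa_def Xb_def Xc_def W_def) (use ex' d irr V sy in blast)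
  moreover have "(W - Xc) \<inter> (W - Xb) = {}" by (simp add: set_eq_iff mN Xa_def Xb_def Xc_def W_def) (use ex' d irr V sy in blast)
  ultimately have "card Xa = card (W - Xc) + card (W - Xb)" using fW by (simp add: card_Un_disjoint)
  hence "k - 2 = 2 * (card W - (k - 2))" using cXa cWc cWb by simp
  hence "l + card V = 2 * k" using ll cW V3 k2 jm by linarith
  thus ?thesis using multipartite_srg[OF sg ed deg lam] by blast
qed


theorem proposition5p2:
  fixes V :: "'a set" and E :: "'a \<Rightarrow> 'a \<Rightarrow> bool"
  assumes "edge_regular V E"
    and "\<exists>C. regular_clique V E C"
    and "\<not> strongly_regular V E"
  shows "\<exists>C. regular_clique V E C \<and> card C \<ge> 4"
proof (rule ccontr)
  assume neg: "\<not> (\<exists>C. regular_clique V E C \<and> card C \<ge> 4)"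
  from assms(1) obtain k l x0 y0 where sg: "simple_graph V E" and ed: "E x0 y0"
    and deg: "\<forall>x\<in>V. card (nbrs V E x) = k"
    and lam: "\<forall>x y. E x y \<longrightarrow> card (nbrs V E x \<inter> nbrs V E y) = l"
    unfolding edge_regular_def by blast
  note g = sg_basic[OF sg]
  note nsr = assms(3)
  from assms(2) obtain C where rc: "regular_clique V E C" by blast
  hence C4: "card C < 4" using neg not_le by blast
  from rc have CV: "C \<subseteq> V" and cl: "\<forall>x\<in>C. \<forall>y\<in>C. x \<noteq> y \<longrightarrow> E x y"
    unfolding regular_clique_def is_clique_def by blast+
  from rc obtain e :: nat where e0: "e > 0" and ecnt: "\<forall>v\<in>V - C. card {w \<in> C. E v w} = e"
    unfolding regular_clique_def by blast
  have fC: "finite C" using CV g(1) finite_subset by blast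
  show False
  proof (cases "V - C = {}")
    case True
    have x0V: "x0 \<in> V" using ed g(2) by blast
    have x0C: "x0 \<in> C" using True x0V by blast
    have "\<forall>y\<in>V. y \<noteq> x0 \<longrightarrow> E x0 y"
    proof (intro ballI impI)
      fix y assume y: "y \<in> V" "y \<noteq> x0"
      hence "y \<in> C" using True by blast
      moreover have "x0 \<noteq> y" using y(2) by simp
      ultimately show "E x0 y" using cl x0C by blast
    qed
    thus False using universal_srg[OF sg ed deg lam x0V] nsr by blast
  next
    case False
    then obtain v where v: "v \<in> V - C" by blast
    have "card {w \<in> C. E v w} \<le> card C" using fC by (intro card_mono) auto
    hence eC: "e \<le> card C" using ecnt v by simp
    show False
    proof (cases "e = card C")
      case True
      hence "C \<noteq> {}" using e0 by auto
      then obtain a where aC: "a \<in> C" by blast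
      have aV: "a \<in> V" using aC CV by blast
      have "\<forall>y\<in>V. y \<noteq> a \<longrightarrow> E a y"
      proof (intro ballI impI)
        fix y assume y: "y \<in> V" "y \<noteq> a"
        show "E a y"
        proof (cases "y \<in> C")
          case True
          moreover have "a \<noteq> y" using y(2) by simp
          ultimately show ?thesis using cl aC by blast
        next
          case False
          have sub: "{w \<in> C. E y w} \<subseteq> C" by blast
          have "card {w \<in> C. E y w} = card C" using ecnt y False True by simp
          hence "{w \<in> C. E y w} = C" using card_subset_eq[OF fC sub] by simp
          hence "E y a" using aC by blast
          thus ?thesis using g(4) by blast
        qed
      qed
      thus False using universal_srg[OF sg ed deg lam aV] nsr by blast
    next
      case False
      hence eC': "e < card C" using eC by simp
      have "card C = 2 \<or> card C = 3" using eC' e0 C4 by linarith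
      thus False
      proof
        assume c2: "card C = 2"
        then obtain a b where ab: "C = {a, b}" "a \<noteq> b" by (rule card2_obt)
        have Eab: "E a b" using cl ab by blast
        have e1: "e = 1" using eC' e0 c2 by simp
        have "\<forall>v\<in>V - {a, b}. card {w \<in> {a, b}. E v w} = 1" using ecnt ab e1 by simp
        thus False using clique2_e1[OF sg ed deg lam Eab] nsr by blast
      next
        assume c3: "card C = 3"
        then obtain a b c where abc: "C = {a, b, c}" "a \<noteq> b" "a \<noteq> c" "b \<noteq> c"
          by (rule card3_obt)
        have E3: "E a b" "E a c" "E b c" using cl abc by blast+
        have "e = 1 \<or> e = 2" using eC' e0 c3 by linarith
        thus False
        proof
          assume "e = 1"
          hence "\<forall>v\<in>V - {a, b, c}. card {w \<in> {a, b, c}. E v w} = 1" using ecnt abc by simp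
          thus False using clique3_e1[OF sg ed deg lam E3] nsr by blast
        next
          assume "e = 2"
          hence "\<forall>v\<in>V - {a, b, c}. card {w \<in> {a, b, c}. E v w} = 2" using ecnt abc by simp
          thus False using clique3_e2[OF sg ed deg lam E3] nsr by blast
        qed
      qed
    qed
  qed
qed

end
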